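(* Let $X$ be a Banach space with dual $X^{\ast}$, and let $X_d$ be a sequence space as described in the context. Let $\{x_n\}\subset X$ and $\{y_n\}\subset X^{\ast}$ be such that for all $y\in X^{\ast}$ and all $x\in X$ $$\{(x_n,y)\}_{n}\in X_d^{\ast}\quad\text{and}\quad \{(x,y_n)\}_n\in X_d,$$ and suppose that for every $x\in X$ $$x=\sum_{n=1}^\infty (x,y_n)\,x_n .$$ Then $\{x_n\}$ and $\{y_n\}$ form a cross-frame.
   Context: $X$ is a Banach space, $X^{\ast}$ its dual, and $(x,y)$ denotes the value of $y\in X^{\ast}$ at $x\in X$. $X_d$ is a Banach space of scalar sequences $a=\{a_n\}$ in which the unit vectors $\varepsilon_n=\{\delta_{nj}\}_j$ form a basis; its dual $X_d^{\ast}$ is identified with a space of sequences via $b\mapsto\{b(\varepsilon_n)\}$, and it is assumed that the coordinate functionals $\{\varepsilon_n^{\ast}\}$ form a basis of $X_d^{\ast}$. The pairing of $a\in X_d$ with $b\in X_d^{\ast}$ is $\sum a_nb_n$. A sequence $\{y_n\}\subset X^{\ast}$ is a frame if there are $A,B>0$ such that $\{(x,y_n)\}\in X_d$ and $A\|x\|_X\le \|\{(x,y_n)\}\|_{X_d}\le B\|x\|_X$ for all $x\in X$. A sequence $\{x_n\}\subset X$ is a co-frame if $\{(x_n,y)\}\in X_d^{\ast}$ for all $y\in X^{\ast}$ and there are $\tilde A,\tilde B>0$ with $\tilde A\|y\|_{X^{\ast}}\le \|\{(x_n,y)\}\|_{X_d^{\ast}}\le \tilde B\|y\|_{X^{\ast}}$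 for all $y\in X^{\ast}$. A co-frame $\{x_n\}$ and a frame $\{y_n\}$ form a cross-frame if $x=\sum_n (x,y_n)x_n$ for all $x\in X$ and $y=\sum_n (x_n,y)y_n$ for all $y\in X^{\ast}$. *)

theory Defs
  imports "HOL-Analysis.Analysis"
begin

text \<open>Sequence spaces X_d are modelled as a set S of real sequences together with
 a norm N on S. The unit vectors:\<close>

definition unit_vec :: "nat \<Rightarrow> nat \<Rightarrow> real" where
  "unit_vec n = (\<lambda>j. if j = n then 1 else 0)"

definition trunc_seq :: "(nat \<Rightarrow> real) \<Rightarrow> nat \<Rightarrow> nat \<Rightarrow> real" where
  "trunc_seq c k = (\<lambda>j. \<Sum>n<k. c n * unit_vec n j)"

definition seq_banach :: "(nat \<Rightarrow> real) set \<Rightarrow> ((nat \<Rightarrow> real) \<Rightarrow> real) \<Rightarrow> bool" where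
  "seq_banach S N \<longleftrightarrow>
     (\<lambda>j. 0) \<in> S \<and>
     (\<forall>a\<in>S. \<forall>b\<in>S. (\<lambda>j. a j + b j) \<in> S) \<and>
     (\<forall>a\<in>S. \<forall>c. (\<lambda>j. c * a j) \<in> S) \<and>
     (\<forall>a\<in>S. 0 \<le> N a \<and> (N a = 0 \<longleftrightarrow> a = (\<lambda>j. 0))) \<and>
     (\<forall>a\<in>S. \<forall>c. N (\<lambda>j. c * a j) = \<bar>c\<bar> * N a) \<and>
     (\<forall>a\<in>S. \<forall>b\<in>S. N (\<lambda>j. a j + b j) \<le> N a + N b) \<and>
     (\<forall>u. (\<forall>k. u k \<in> S) \<and> (\<forall>e>0. \<exists>M. \<forall>m\<ge>M. \<forall>k\<ge>M. N (\<lambda>j. u m j - u k j) < e)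
          \<longrightarrow> (\<exists>a\<in>S. (\<lambda>k. N (\<lambda>j. u k j - a j)) \<longlonglongrightarrow> 0))"

definition unit_vectors_basis :: "(nat \<Rightarrow> real) set \<Rightarrow> ((nat \<Rightarrow> real) \<Rightarrow> real) \<Rightarrow> bool" where
  "unit_vectors_basis S N \<longleftrightarrow>
     (\<forall>n. unit_vec n \<in> S) \<and>
     (\<forall>a\<in>S. \<forall>c. (\<lambda>k. N (\<lambda>j. a j - trunc_seq c k j)) \<longlonglongrightarrow> 0 \<longleftrightarrow> c = a)"

text \<open>Membership in the dual X_d^*, identified with sequences b = (f(e_n))_n for
 bounded linear functionals f on (S,N).\<close>
definition in_dual :: "(nat \<Rightarrow> real) set \<Rightarrow> ((nat \<Rightarrow> real) \<Rightarrow> real) \<Rightarrow> (nat \<Rightarrow> real) \<Rightarrow> bool" where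
  "in_dual S N b \<longleftrightarrow>
     (\<exists>f. (\<forall>a\<in>S. \<forall>a'\<in>S. f (\<lambda>j. a j + a' j) = f a + f a') \<and>
          (\<forall>a\<in>S. \<forall>c. f (\<lambda>j. c * a j) = c * f a) \<and>
          (\<exists>K. \<forall>a\<in>S. \<bar>f a\<bar> \<le> K * N a) \<and>
          (\<forall>n. f (unit_vec n) = b n))"

definition dual_norm :: "(nat \<Rightarrow> real) set \<Rightarrow> ((nat \<Rightarrow> real) \<Rightarrow> real) \<Rightarrow> (nat \<Rightarrow> real) \<Rightarrow> real" where
  "dual_norm S N b = (SUP a\<in>{a\<in>S. N a \<le> 1}. \<bar>\<Sum>n. a n * b n\<bar>)"

definition coord_functionals_basis :: "(nat \<Rightarrow> real) set \<Rightarrow> ((nat \<Rightarrow> real) \<Rightarrow> real) \<Rightarrow> bool" where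
  "coord_functionals_basis S N \<longleftrightarrow>
     (\<forall>b. in_dual S N b \<longrightarrow>
        (\<forall>c. (\<lambda>k. dual_norm S N (\<lambda>j. b j - trunc_seq c k j)) \<longlonglongrightarrow> 0 \<longleftrightarrow> c = b))"

definition is_frame :: "(nat \<Rightarrow> real) set \<Rightarrow> ((nat \<Rightarrow> real) \<Rightarrow> real)
    \<Rightarrow> (nat \<Rightarrow> ('a::banach \<Rightarrow>\<^sub>L real)) \<Rightarrow> bool" where
  "is_frame S N y \<longleftrightarrow>
     (\<forall>x. (\<lambda>n. blinfun_apply (y n) x) \<in> S) \<and>
     (\<exists>A B. A > 0 \<and> B > 0 \<and> (\<forall>x. A * norm x \<le> N (\<lambda>n. blinfun_apply (y n) x) \<and>
                                   N (\<lambda>n. blinfun_apply (y n) x) \<le> B * norm x))"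

definition is_coframe :: "(nat \<Rightarrow> real) set \<Rightarrow> ((nat \<Rightarrow> real) \<Rightarrow> real)
    \<Rightarrow> (nat \<Rightarrow> 'a::banach) \<Rightarrow> bool" where
  "is_coframe S N x \<longleftrightarrow>
     (\<forall>y::'a \<Rightarrow>\<^sub>L real. in_dual S N (\<lambda>n. blinfun_apply y (x n))) \<and>
     (\<exists>A B. A > 0 \<and> B > 0 \<and> (\<forall>y::'a \<Rightarrow>\<^sub>L real.
        A * norm y \<le> dual_norm S N (\<lambda>n. blinfun_apply y (x n)) \<and>
        dual_norm S N (\<lambda>n. blinfun_apply y (x n)) \<le> B * norm y))"

definition is_cross_frame :: "(nat \<Rightarrow> real) set \<Rightarrow> ((nat \<Rightarrow> real) \<Rightarrow> real)
    \<Rightarrow> (nat \<Rightarrow> 'a::banach) \<Rightarrow> (nat \<Rightarrow> ('a \<Rightarrow>\<^sub>L real)) \<Rightarrow> bool" where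
  "is_cross_frame S N x y \<longleftrightarrow>
     is_coframe S N x \<and> is_frame S N y \<and>
     (\<forall>z. (\<lambda>n. blinfun_apply (y n) z *\<^sub>R x n) sums z) \<and>
     (\<forall>g::'a \<Rightarrow>\<^sub>L real. (\<lambda>n. blinfun_apply g (x n) *\<^sub>R y n) sums g)"

end

theory Submission
  imports Defs
begin

definition goodG :: "'a::real_normed_vector \<Rightarrow> ('a \<times> real) set \<Rightarrow> bool" where
 "goodG z G \<longleftrightarrow> (\<forall>u a b. (u,a)\<in>G \<longrightarrow> (u,b)\<in>G \<longrightarrow> a = b) \<and>
   (\<forall>u a v b. (u,a)\<in>G \<longrightarrow> (v,b)\<in>G \<longrightarrow> (u+v,a+b)\<in>G) \<and>
   (\<forall>u a c. (u,a)\<in>G \<longrightarrow> (c *\<^sub>R u, c*a)\<in>G) \<and>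
   (\<forall>u a. (u,a)\<in>G \<longrightarrow> a \<le> norm u) \<and> (z, norm z) \<in> G"

lemma goodG_zero: "goodG z G \<Longrightarrow> (0,0) \<in> G"
  unfolding goodG_def by (metis mult_zero_left scaleR_zero_left)

lemma goodG_base: "goodG z {(t *\<^sub>R z, t * norm z) | t. True}"
  unfolding goodG_def
proof (intro conjI allI impI)
  fix u a b assume "(u,a) \<in> {(t *\<^sub>R z, t * norm z) | t. True}" "(u,b) \<in> {(t *\<^sub>R z, t * norm z) | t. True}"
  then obtain t where t: "u = t *\<^sub>R z" "a = t * norm z" by blast
  obtain s where s: "u = s *\<^sub>R z" "b = s * norm z" using \<open>(u,b) \<in> _\<close> by blast
  show "a = b"
  proof (cases "z = 0")
    case True then show ?thesis using t s by simp
  next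
    case False then have "t = s" using t s by (metis scaleR_cancel_right)
    then show ?thesis using t s by simp
  qed
next
  fix u a v b assume "(u,a) \<in> {(t *\<^sub>R z, t * norm z) | t. True}" "(v,b) \<in> {(t *\<^sub>R z, t * norm z) | t. True}"
  then obtain t s where "u = t *\<^sub>R z" "a = t * norm z" "v = s *\<^sub>R z" "b = s * norm z" by auto
  then show "(u+v,a+b) \<in> {(t *\<^sub>R z, t * norm z) | t. True}"
    by (auto intro!: exI[of _ "t+s"] simp: algebra_simps)
next
  fix u a c assume "(u,a) \<in> {(t *\<^sub>R z, t * norm z) | t. True}"
  then obtain t where "u = t *\<^sub>R z" "a = t * norm z" by auto
  then show "(c *\<^sub>R u, c*a) \<in> {(t *\<^sub>R z, t * norm z) | t. True}"
    by (auto intro!: exI[of _ "c*t"] simp: algebra_simps)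
next
  fix u a assume "(u,a) \<in> {(t *\<^sub>R z, t * norm z) | t. True}"
  then obtain t where "u = t *\<^sub>R z" "a = t * norm z" by auto
  then show "a \<le> norm u" by (auto intro: mult_right_mono)
next
  show "(z, norm z) \<in> {(t *\<^sub>R z, t * norm z) | t. True}"
    by (auto intro!: exI[of _ 1])
qed

lemma goodG_chain:
  assumes "C \<in> chains {G. goodG z G}" "C \<noteq> {}"
  shows "goodG z (\<Union>C)"
proof -
  have CA: "\<And>G. G \<in> C \<Longrightarrow> goodG z G" and ch: "\<And>G H. G \<in> C \<Longrightarrow> H \<in> C \<Longrightarrow> G \<subseteq> H \<or> H \<subseteq> G"
    using assms(1) unfolding chains_def chain_subset_def by auto
  have two: "\<exists>G\<in>C. p \<in> G \<and> q \<in> G" if "p \<in> \<Union>C" "q \<in> \<Union>C" for p q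
    using that ch by blast
  show ?thesis
    unfolding goodG_def
  proof (intro conjI allI impI)
    fix u a b assume "(u,a) \<in> \<Union>C" "(u,b) \<in> \<Union>C"
    then obtain G where "G\<in>C" "(u,a)\<in>G" "(u,b)\<in>G" using two by blast
    then show "a = b" using CA unfolding goodG_def by blast
  next
    fix u a v b assume "(u,a) \<in> \<Union>C" "(v,b) \<in> \<Union>C"
    then obtain G where "G\<in>C" "(u,a)\<in>G" "(v,b)\<in>G" using two by blast
    then show "(u+v,a+b) \<in> \<Union>C" using CA unfolding goodG_def by blast
  next
    fix u a c assume "(u,a) \<in> \<Union>C"
    then obtain G where "G\<in>C" "(u,a)\<in>G" by blast
    then show "(c *\<^sub>R u, c*a) \<in> \<Union>C" using CA unfolding goodG_def by blast
  next
    fix u a assume "(u,a) \<in> \<Union>C"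
    then obtain G where "G\<in>C" "(u,a)\<in>G" by blast
    then show "a \<le> norm u" using CA unfolding goodG_def by blast
  next
    obtain G where "G \<in> C" using assms(2) by blast
    then show "(z, norm z) \<in> \<Union>C" using CA unfolding goodG_def by blast
  qed
qed

lemma goodG_total:
  assumes M: "goodG z M" and max: "\<And>G. goodG z G \<Longrightarrow> M \<subseteq> G \<Longrightarrow> G = M"
  shows "\<exists>a. (w,a) \<in> M"
proof (rule ccontr)
  assume nw: "\<not> (\<exists>a. (w,a) \<in> M)"
  have fnc: "\<And>u a b. (u,a)\<in>M \<Longrightarrow> (u,b)\<in>M \<Longrightarrow> a = b"
    and add: "\<And>u a v b. (u,a)\<in>M \<Longrightarrow> (v,b)\<in>M \<Longrightarrow> (u+v,a+b)\<in>M"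
    and scl: "\<And>u a c. (u,a)\<in>M \<Longrightarrow> (c *\<^sub>R u, c*a)\<in>M"
    and dom: "\<And>u a. (u,a)\<in>M \<Longrightarrow> a \<le> norm u"
    and zM: "(z, norm z) \<in> M"
    using M unfolding goodG_def by blast+
  have M0: "(0,0) \<in> M" using goodG_zero[OF M] .
  define L where "L = {a - norm (u - w) | u a. (u,a) \<in> M}"
  define c where "c = Sup L"
  have key: "a - norm (u - w) \<le> norm (v + w) - b" if "(u,a)\<in>M" "(v,b)\<in>M" for u a v b
  proof -
    have "a + b \<le> norm (u + v)" using dom[OF add[OF that]] .
    also have "norm (u + v) \<le> norm (u - w) + norm (v + w)"
      using norm_triangle_ineq[of "u - w" "v + w"] by simp
    finally show ?thesis by simp
  qed
  have Lne: "L \<noteq> {}" using M0 unfolding L_def by blast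
  have Lbdd: "bdd_above L"
    unfolding bdd_above_def L_def using key[OF _ M0] by auto
  have c1: "a - norm (u - w) \<le> c" if "(u,a)\<in>M" for u a
    unfolding c_def by (rule cSup_upper[OF _ Lbdd]) (use that L_def in blast)
  have c2: "c \<le> norm (v + w) - b" if "(v,b)\<in>M" for v b
    unfolding c_def by (rule cSup_least[OF Lne]) (use key that L_def in blast)
  define G' where "G' = {(u + t *\<^sub>R w, a + t * c) | u a t. (u,a) \<in> M}"
  have wD: False if "(u,a)\<in>M" "(u',a')\<in>M" "u + t *\<^sub>R w = u' + t' *\<^sub>R w" "t \<noteq> t'" for u a u' a' t t'
  proof -
    have "(u' + (-1) *\<^sub>R u, a' + (-1)*a) \<in> M" using add[OF that(2) scl[OF that(1)]] .
    then have "(u' - u, a' - a) \<in> M" by simp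
    then have "((1/(t - t')) *\<^sub>R (u' - u), (1/(t-t')) * (a' - a)) \<in> M"
      by (rule scl)
    moreover have "(1/(t - t')) *\<^sub>R (u' - u) = w"
    proof -
      have "u' - u = (t - t') *\<^sub>R w" using that(3) by (simp add: algebra_simps)
      then show ?thesis using that(4) by simp
    qed
    ultimately show False using nw by auto
  qed
  have "goodG z G'"
    unfolding goodG_def
  proof (intro conjI allI impI)
    fix p a b assume "(p,a) \<in> G'" "(p,b) \<in> G'"
    then obtain u a0 t u' a0' t' where A: "(u,a0)\<in>M" "p = u + t *\<^sub>R w" "a = a0 + t*c"
      "(u',a0')\<in>M" "p = u' + t' *\<^sub>R w" "b = a0' + t'*c"
      unfolding G'_def by blast
    have "t = t'" using wD[OF A(1) A(4)] A by metis
    then have "u = u'" using A by simp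
    then show "a = b" using fnc A \<open>t = t'\<close> by metis
  next
    fix p a q b assume "(p,a) \<in> G'" "(q,b) \<in> G'"
    then obtain u a0 t u' a0' t' where A: "(u,a0)\<in>M" "p = u + t *\<^sub>R w" "a = a0 + t*c"
      "(u',a0')\<in>M" "q = u' + t' *\<^sub>R w" "b = a0' + t'*c"
      unfolding G'_def by blast
    have "p + q = (u+u') + (t+t') *\<^sub>R w" "a + b = (a0+a0') + (t+t')*c"
      using A by (auto simp: algebra_simps)
    then show "(p+q,a+b) \<in> G'"
      unfolding G'_def using add[OF A(1) A(4)] by blast
  next
    fix p a r assume "(p,a) \<in> G'"
    then obtain u a0 t where A: "(u,a0)\<in>M" "p = u + t *\<^sub>R w" "a = a0 + t*c"
      unfolding G'_def by blast
    have "r *\<^sub>R p = r *\<^sub>R u + (r*t) *\<^sub>R w" "r * a = r*a0 + (r*t)*c"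
      using A by (auto simp: algebra_simps)
    then show "(r *\<^sub>R p, r*a) \<in> G'"
      unfolding G'_def using scl[OF A(1), of r] by blast
  next
    fix p a assume "(p,a) \<in> G'"
    then obtain u a0 t where A: "(u,a0)\<in>M" "p = u + t *\<^sub>R w" "a = a0 + t*c"
      unfolding G'_def by blast
    consider "t = 0" | "t > 0" | "t < 0" by linarith
    then show "a \<le> norm p"
    proof cases
      case 1 then show ?thesis using A dom by simp
    next
      case 2
      have "((1/t) *\<^sub>R u, (1/t)*a0) \<in> M" using scl[OF A(1)] .
      from c2[OF this] have "c \<le> norm ((1/t) *\<^sub>R u + w) - a0/t" by simp
      then have "t * c \<le> t * norm ((1/t) *\<^sub>R u + w) - a0"
        using 2 by (simp add: field_simps)
      also have "t * norm ((1/t) *\<^sub>R u + w) = norm (t *\<^sub>R ((1/t) *\<^sub>R u + w))"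
        using 2 by simp
      also have "t *\<^sub>R ((1/t) *\<^sub>R u + w) = p" using 2 A by (simp add: scaleR_add_right)
      finally show ?thesis using A by simp
    next
      case 3
      define s where "s = -t"
      have s: "s > 0" using 3 s_def by simp
      have "((1/s) *\<^sub>R u, (1/s)*a0) \<in> M" using scl[OF A(1)] .
      from c1[OF this] have "a0/s - norm ((1/s) *\<^sub>R u - w) \<le> c" by simp
      then have "a0 - s * norm ((1/s) *\<^sub>R u - w) \<le> s * c"
        using s by (simp add: field_simps)
      also have "s * norm ((1/s) *\<^sub>R u - w) = norm (s *\<^sub>R ((1/s) *\<^sub>R u - w))"
        using s by simp
      also have "s *\<^sub>R ((1/s) *\<^sub>R u - w) = p" using s A s_def by (simp add: scaleR_diff_right)
      finally show ?thesis using A s_def by simp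
    qed
  next
    show "(z, norm z) \<in> G'"
    proof -
      have "z = z + 0 *\<^sub>R w" "norm z = norm z + 0 * c" by simp_all
      then show ?thesis unfolding G'_def using zM by blast
    qed
  qed
  moreover have "M \<subseteq> G'"
  proof
    fix p assume "p \<in> M"
    then obtain u a where "p = (u,a)" "(u,a) \<in> M" by (cases p) auto
    moreover have "u = u + 0 *\<^sub>R w" "a = a + 0 * c" by simp_all
    ultimately show "p \<in> G'" unfolding G'_def by blast
  qed
  ultimately have "G' = M" using max by blast
  moreover have "(w, c) \<in> G'"
  proof -
    have "w = 0 + 1 *\<^sub>R w" "c = 0 + 1 * c" by simp_all
    then show ?thesis unfolding G'_def using M0 by blast
  qed
  ultimately show False using nw by blast
qed

lemma hahn_banach_norming:
  fixes z :: "'a::real_normed_vector"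
  shows "\<exists>g::'a \<Rightarrow>\<^sub>L real. norm g \<le> 1 \<and> blinfun_apply g z = norm z"
proof -
  have "\<exists>M\<in>{G. goodG z G}. \<forall>X\<in>{G. goodG z G}. M \<subseteq> X \<longrightarrow> X = M"
  proof (rule Zorn_Lemma2, intro ballI)
    fix C assume C: "C \<in> chains {G. goodG z G}"
    show "\<exists>U\<in>{G. goodG z G}. \<forall>X\<in>C. X \<subseteq> U"
    proof (cases "C = {}")
      case True then show ?thesis using goodG_base by blast
    next
      case False then show ?thesis using goodG_chain[OF C] by blast
    qed
  qed
  then obtain M where M: "goodG z M" and max: "\<And>G. goodG z G \<Longrightarrow> M \<subseteq> G \<Longrightarrow> G = M" by blast
  have fnc: "\<And>u a b. (u,a)\<in>M \<Longrightarrow> (u,b)\<in>M \<Longrightarrow> a = b"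
    and add: "\<And>u a v b. (u,a)\<in>M \<Longrightarrow> (v,b)\<in>M \<Longrightarrow> (u+v,a+b)\<in>M"
    and scl: "\<And>u a c. (u,a)\<in>M \<Longrightarrow> (c *\<^sub>R u, c*a)\<in>M"
    and dom: "\<And>u a. (u,a)\<in>M \<Longrightarrow> a \<le> norm u"
    and zM: "(z, norm z) \<in> M"
    using M unfolding goodG_def by blast+
  define g where "g x = (THE a. (x,a) \<in> M)" for x
  have gM: "(x, g x) \<in> M" for x
    unfolding g_def using goodG_total[OF M max, of x] fnc by (metis theI)
  have gI: "(x, a) \<in> M \<Longrightarrow> g x = a" for x a using gM fnc by blast
  have gadd: "g (x + y) = g x + g y" for x y using gI[OF add[OF gM gM]] .
  have gscl: "g (r *\<^sub>R x) = r *\<^sub>R g x" for r x using gI[OF scl[OF gM]] by simp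
  have gb: "norm (g x) \<le> norm x * 1" for x
  proof -
    have "g x \<le> norm x" using dom[OF gM] .
    moreover have "g (-1 *\<^sub>R x) \<le> norm (-1 *\<^sub>R x)" using dom[OF gM] .
    then have "- g x \<le> norm x" using gscl[of "-1" x] by simp
    ultimately show ?thesis by simp
  qed
  have bl: "bounded_linear g"
    by (rule bounded_linear_intro[OF gadd gscl gb])
  show ?thesis
  proof (intro exI conjI)
    show "norm (Blinfun g) \<le> 1"
      by (rule norm_blinfun_bound) (use gb bl in \<open>auto simp: bounded_linear_Blinfun_apply\<close>)
    show "blinfun_apply (Blinfun g) z = norm z"
      using gI[OF zM] bl by (simp add: bounded_linear_Blinfun_apply)
  qed
qed


lemma baire_ball:
  fixes E :: "nat \<Rightarrow> 'b::banach set"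
  assumes cl: "\<And>m. closed (E m)" and cov: "\<And>x. \<exists>m. x \<in> E m"
  shows "\<exists>m x0 r. r > 0 \<and> ball x0 r \<subseteq> E m"
proof (rule ccontr)
  assume H: "\<not> ?thesis"
  have "euclidean interior_of \<Union>(range E) = {}"
  proof (rule Baire_category_alt)
    show "completely_metrizable_space (euclidean :: 'b topology) \<or> locally_compact_space (euclidean :: 'b topology) \<and> regular_space (euclidean :: 'b topology)"
      using completely_metrizable_space_euclidean by blast
    show "countable (range E)" by simp
    fix T assume "T \<in> range E"
    then obtain m where T: "T = E m" by blast
    have "interior (E m) = {}"
    proof (rule ccontr)
      assume "interior (E m) \<noteq> {}"
      then obtain x where "x \<in> interior (E m)" by blast
      then obtain r where "r > 0" "ball x r \<subseteq> E m"
        by (meson mem_interior)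
      then show False using H by blast
    qed
    then show "closedin euclidean T \<and> euclidean interior_of T = {}"
      using cl T by simp
  qed
  moreover have "\<Union>(range E) = UNIV" using cov by blast
  ultimately show False by simp
qed

lemma ubp:
  fixes p :: "'i \<Rightarrow> 'b::banach \<Rightarrow> real"
  assumes cl: "\<And>i m. closed {x. p i x \<le> m}"
    and sub: "\<And>i x y. p i (x - y) \<le> p i x + p i y"
    and hom: "\<And>i c x. p i (c *\<^sub>R x) = \<bar>c\<bar> * p i x"
    and bnd: "\<And>x. \<exists>M. \<forall>i. p i x \<le> M"
  shows "\<exists>C>0. \<forall>i x. p i x \<le> C * norm x"
proof -
  define E where "E m = (\<Inter>i. {x. p i x \<le> real m})" for m
  have "\<exists>m x0 r. r > 0 \<and> ball x0 r \<subseteq> E m"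
  proof (rule baire_ball)
    show "closed (E m)" for m unfolding E_def by (intro closed_INT ballI cl)
    fix x
    obtain M where "\<forall>i. p i x \<le> M" using bnd by blast
    moreover have "M \<le> real (nat \<lceil>M\<rceil>)" by linarith
    ultimately have "x \<in> E (nat \<lceil>M\<rceil>)" unfolding E_def using order_trans by blast
    then show "\<exists>m. x \<in> E m" ..
  qed
  then obtain m x0 r where r: "r > 0" and B: "ball x0 r \<subseteq> E m" by blast
  have x0: "x0 \<in> E m" using B r by auto
  have small: "p i h \<le> 2 * m" if "norm h < r" for i h
  proof -
    have "x0 + h \<in> ball x0 r" using that by (simp add: dist_norm)
    then have "p i (x0 + h) \<le> m" using B unfolding E_def by blast
    moreover have "p i x0 \<le> m" using x0 unfolding E_def by blast
    moreover have "p i ((x0 + h) - x0) \<le> p i (x0 + h) + p i x0" by (rule sub)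
    ultimately show ?thesis by simp
  qed
  have p0: "p i 0 = 0" for i using hom[of i 0 0] by simp
  have pnn: "p i x \<ge> 0" for i x
  proof -
    have "p i (x - x) \<le> p i x + p i x" by (rule sub)
    then show ?thesis using p0 by simp
  qed
  show ?thesis
  proof (intro exI[of _ "4 * real m / r + 1"] conjI allI)
    show "0 < 4 * real m / r + 1" using r by (simp add: add_nonneg_pos)
    fix i x
    show "p i x \<le> (4 * real m / r + 1) * norm x"
    proof (cases "x = 0")
      case True then show ?thesis using p0 by simp
    next
      case False
      then have nx: "norm x > 0" by simp
      define c where "c = r / (2 * norm x)"
      have c: "c > 0" using r nx c_def by simp
      have "norm (c *\<^sub>R x) = r / 2" using c nx c_def r by simp
      then have "p i (c *\<^sub>R x) \<le> 2 * m" using r by (intro small) simp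
      then have "c * p i x \<le> 2 * m" using hom c by simp
      then have "p i x \<le> 2 * m / c" using c by (simp add: field_simps)
      also have "2 * m / c = (4 * real m / r) * norm x" unfolding c_def using r nx by (simp add: field_simps)
      also have "\<dots> \<le> (4 * real m / r + 1) * norm x" using nx by (simp add: distrib_right)
      finally show ?thesis .
    qed
  qed
qed


locale seqsp =
  fixes S :: "(nat \<Rightarrow> real) set" and N :: "(nat \<Rightarrow> real) \<Rightarrow> real"
  assumes sb: "seq_banach S N" and ub: "unit_vectors_basis S N"
begin

lemma S0: "(\<lambda>j. 0) \<in> S" using sb unfolding seq_banach_def by blast
lemma Sadd: "a \<in> S \<Longrightarrow> b \<in> S \<Longrightarrow> (\<lambda>j. a j + b j) \<in> S" using sb unfolding seq_banach_def by blast
lemma Ssc: "a \<in> S \<Longrightarrow> (\<lambda>j. c * a j) \<in> S" using sb unfolding seq_banach_def by blast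
lemma Nnn: "a \<in> S \<Longrightarrow> 0 \<le> N a" using sb unfolding seq_banach_def by blast
lemma Neq0: "a \<in> S \<Longrightarrow> N a = 0 \<longleftrightarrow> a = (\<lambda>j. 0)" using sb unfolding seq_banach_def by blast
lemma Nsc: "a \<in> S \<Longrightarrow> N (\<lambda>j. c * a j) = \<bar>c\<bar> * N a" using sb unfolding seq_banach_def by blast
lemma Ntri: "a \<in> S \<Longrightarrow> b \<in> S \<Longrightarrow> N (\<lambda>j. a j + b j) \<le> N a + N b" using sb unfolding seq_banach_def by blast
lemma Scomplete: "(\<forall>k. u k \<in> S) \<Longrightarrow> (\<forall>e>0. \<exists>M. \<forall>m\<ge>M. \<forall>k\<ge>M. N (\<lambda>j. u m j - u k j) < e)
          \<Longrightarrow> (\<exists>a\<in>S. (\<lambda>k. N (\<lambda>j. u k j - a j)) \<longlonglongrightarrow> 0)"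
  using sb unfolding seq_banach_def by blast

lemma N0: "N (\<lambda>j. 0) = 0" using Neq0[OF S0] by simp

lemma Ssub: "a \<in> S \<Longrightarrow> b \<in> S \<Longrightarrow> (\<lambda>j. a j - b j) \<in> S"
  using Sadd[OF _ Ssc[of b "-1"], of a] by simp

lemma Sneg: "a \<in> S \<Longrightarrow> (\<lambda>j. - a j) \<in> S"
  using Ssc[of a "-1"] by simp

lemma Nneg: "a \<in> S \<Longrightarrow> N (\<lambda>j. - a j) = N a"
  using Nsc[of a "-1"] by simp

lemma Nsub_sym: "a \<in> S \<Longrightarrow> b \<in> S \<Longrightarrow> N (\<lambda>j. a j - b j) = N (\<lambda>j. b j - a j)"
  using Nneg[OF Ssub[of b a]] by simp

lemma Nsub_le: "a \<in> S \<Longrightarrow> b \<in> S \<Longrightarrow> N (\<lambda>j. a j - b j) \<le> N a + N b"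
  using Ntri[OF _ Sneg[of b], of a] Nneg[of b] by simp

lemma Nge: "a \<in> S \<Longrightarrow> b \<in> S \<Longrightarrow> N a \<le> N b + N (\<lambda>j. a j - b j)"
  using Ntri[OF _ Ssub[of a b], of b] by simp

lemma Ntri3: "a \<in> S \<Longrightarrow> b \<in> S \<Longrightarrow> c \<in> S \<Longrightarrow> N (\<lambda>j. a j - c j) \<le> N (\<lambda>j. a j - b j) + N (\<lambda>j. b j - c j)"
  using Ntri[OF Ssub[of a b] Ssub[of b c]] by simp

lemma ue: "unit_vec n \<in> S" using ub unfolding unit_vectors_basis_def by blast

lemma Nue: "N (unit_vec n) > 0"
proof -
  have "unit_vec n \<noteq> (\<lambda>j. 0)" unfolding unit_vec_def by (metis one_neq_zero)
  then have "N (unit_vec n) \<noteq> 0" using Neq0[OF ue[of n]] by blast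
  then show ?thesis using Nnn[OF ue[of n]] by linarith
qed

lemma trunc_eq: "trunc_seq c k = (\<lambda>j. if j < k then c j else 0)"
  unfolding trunc_seq_def unit_vec_def
  by (rule ext) (simp add: if_distrib[of "\<lambda>x. _ * x"] cong: if_cong)

lemma trunc_Suc: "trunc_seq c (Suc k) = (\<lambda>j. trunc_seq c k j + c k * unit_vec k j)"
  unfolding trunc_eq unit_vec_def by (rule ext) (auto simp: less_Suc_eq)

lemma trunc_S: "trunc_seq c k \<in> S"
proof (induction k)
  case 0 then show ?case using S0 unfolding trunc_eq by simp
next
  case (Suc k) then show ?case unfolding trunc_Suc by (intro Sadd Ssc ue)
qed

lemma expand: "a \<in> S \<Longrightarrow> (\<lambda>k. N (\<lambda>j. a j - trunc_seq a k j)) \<longlonglongrightarrow> 0"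
  using ub unfolding unit_vectors_basis_def by blast

lemma uniq: "a \<in> S \<Longrightarrow> (\<lambda>k. N (\<lambda>j. a j - trunc_seq c k j)) \<longlonglongrightarrow> 0 \<Longrightarrow> c = a"
  using ub unfolding unit_vectors_basis_def by blast

lemma trunc_diff: "(\<lambda>j. trunc_seq a k j - trunc_seq b k j) = trunc_seq (\<lambda>n. a n - b n) k"
  unfolding trunc_eq by auto

lemma trunc_add: "(\<lambda>j. trunc_seq a k j + trunc_seq b k j) = trunc_seq (\<lambda>n. a n + b n) k"
  unfolding trunc_eq by auto

lemma trunc_sc: "(\<lambda>j. c * trunc_seq a k j) = trunc_seq (\<lambda>n. c * a n) k"
  unfolding trunc_eq by auto

lemma Ntrunc_bound: "N (trunc_seq c k) \<le> (\<Sum>n<k. \<bar>c n\<bar> * N (unit_vec n))"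
proof (induction k)
  case 0 then show ?case using N0 unfolding trunc_eq by simp
next
  case (Suc k)
  have "N (trunc_seq c (Suc k)) \<le> N (trunc_seq c k) + N (\<lambda>j. c k * unit_vec k j)"
    unfolding trunc_Suc by (intro Ntri trunc_S Ssc ue)
  also have "\<dots> = N (trunc_seq c k) + \<bar>c k\<bar> * N (unit_vec k)" using Nsc[OF ue] by simp
  finally show ?case using Suc by simp
qed

lemma Ntrunc_cont: "\<bar>N (trunc_seq c k) - N (trunc_seq c' k)\<bar> \<le> (\<Sum>n<k. \<bar>c n - c' n\<bar> * N (unit_vec n))"
proof -
  have "N (trunc_seq c k) \<le> N (trunc_seq c' k) + N (trunc_seq (\<lambda>n. c n - c' n) k)"
    using Nge[OF trunc_S trunc_S, of c k c' k] by (simp add: trunc_diff)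
  moreover have "N (trunc_seq c' k) \<le> N (trunc_seq c k) + N (trunc_seq (\<lambda>n. c n - c' n) k)"
    using Nge[OF trunc_S trunc_S, of c' k c k] Nsub_sym[OF trunc_S trunc_S, of c' k c k]
    by (simp add: trunc_diff)
  moreover have "N (trunc_seq (\<lambda>n. c n - c' n) k) \<le> (\<Sum>n<k. \<bar>c n - c' n\<bar> * N (unit_vec n))"
    by (rule Ntrunc_bound)
  ultimately show ?thesis by linarith
qed

lemma trunc_tendsto:
  assumes "\<And>n. (\<lambda>i. u i n) \<longlonglongrightarrow> v n"
  shows "(\<lambda>i. N (trunc_seq (u i) k)) \<longlonglongrightarrow> N (trunc_seq v k)"
proof -
  have "(\<lambda>i. N (trunc_seq (u i) k) - N (trunc_seq v k)) \<longlonglongrightarrow> 0"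
  proof (rule Lim_null_comparison)
    show "\<forall>\<^sub>F i in sequentially. norm (N (trunc_seq (u i) k) - N (trunc_seq v k)) \<le> (\<Sum>n<k. \<bar>u i n - v n\<bar> * N (unit_vec n))"
      using Ntrunc_cont by simp
    have "(\<lambda>i. \<Sum>n<k. \<bar>u i n - v n\<bar> * N (unit_vec n)) \<longlonglongrightarrow> (\<Sum>n<k. \<bar>v n - v n\<bar> * N (unit_vec n))"
      by (intro tendsto_intros assms)
    then show "(\<lambda>i. \<Sum>n<k. \<bar>u i n - v n\<bar> * N (unit_vec n)) \<longlonglongrightarrow> 0" by simp
  qed
  then show ?thesis using Lim_null tendsto_diff by (simp add: LIM_zero_iff)
qed

lemma trunc_limit_bound:
  assumes "\<And>n. (\<lambda>i. u i n) \<longlonglongrightarrow> v n" and "\<And>i. i \<ge> i0 \<Longrightarrow> N (trunc_seq (u i) k) \<le> B"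
  shows "N (trunc_seq v k) \<le> B"
proof -
  have "(\<lambda>i. N (trunc_seq (u i) k)) \<longlonglongrightarrow> N (trunc_seq v k)" by (rule trunc_tendsto[OF assms(1)])
  then show ?thesis by (rule LIMSEQ_le_const2) (use assms(2) in blast)
qed

lemma pairing:
  assumes fadd: "\<forall>a\<in>S. \<forall>a'\<in>S. f (\<lambda>j. a j + a' j) = f a + f a'"
    and fsc: "\<forall>a\<in>S. \<forall>c. f (\<lambda>j. c * a j) = c * f a"
    and fK: "\<forall>a\<in>S. \<bar>f a\<bar> \<le> K * N a"
    and fb: "\<forall>n. f (unit_vec n) = b n"
    and a: "a \<in> S"
  shows "(\<lambda>n. a n * b n) sums f a"
proof -
  have ftr: "f (trunc_seq a k) = (\<Sum>n<k. a n * b n)" for k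
  proof (induction k)
    case 0
    have "f (\<lambda>j. 0 * a j) = 0 * f a" using fsc a by blast
    then show ?case unfolding trunc_eq by simp
  next
    case (Suc k)
    have "f (trunc_seq a (Suc k)) = f (trunc_seq a k) + f (\<lambda>j. a k * unit_vec k j)"
      unfolding trunc_Suc by (rule fadd[rule_format, OF trunc_S Ssc[OF ue]])
    also have "f (\<lambda>j. a k * unit_vec k j) = a k * b k" using fsc ue fb by simp
    finally show ?case using Suc by simp
  qed
  have fsub: "f (\<lambda>j. x j - y j) = f x - f y" if "x \<in> S" "y \<in> S" for x y
  proof -
    have "f (\<lambda>j. (x j - y j) + y j) = f (\<lambda>j. x j - y j) + f y"
      by (rule fadd[rule_format, OF Ssub[OF that] that(2)])
    then show ?thesis by simp
  qed
  have "(\<lambda>k. f a - f (trunc_seq a k)) \<longlonglongrightarrow> 0"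
  proof (rule Lim_null_comparison)
    show "\<forall>\<^sub>F k in sequentially. norm (f a - f (trunc_seq a k)) \<le> K * N (\<lambda>j. a j - trunc_seq a k j)"
    proof (intro always_eventually allI)
      fix k
      have "\<bar>f (\<lambda>j. a j - trunc_seq a k j)\<bar> \<le> K * N (\<lambda>j. a j - trunc_seq a k j)"
        using fK Ssub[OF a trunc_S] by blast
      then show "norm (f a - f (trunc_seq a k)) \<le> K * N (\<lambda>j. a j - trunc_seq a k j)"
        using fsub[OF a trunc_S] by simp
    qed
    show "(\<lambda>k. K * N (\<lambda>j. a j - trunc_seq a k j)) \<longlonglongrightarrow> 0"
      using tendsto_mult_right_zero[OF expand[OF a]] by simp
  qed
  then have "(\<lambda>k. f a - (f a - f (trunc_seq a k))) \<longlonglongrightarrow> f a - 0"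
    by (intro tendsto_intros)
  then show ?thesis unfolding sums_def ftr[symmetric] by simp
qed

lemma in_dualE:
  assumes "in_dual S N b"
  obtains f K where "\<forall>a\<in>S. \<forall>a'\<in>S. f (\<lambda>j. a j + a' j) = f a + f a'"
    "\<forall>a\<in>S. \<forall>c. f (\<lambda>j. c * a j) = c * f a" "\<forall>a\<in>S. \<bar>f a\<bar> \<le> K * N a" "\<forall>n. f (unit_vec n) = b n"
  using assms unfolding in_dual_def by blast

lemma dual_sums:
  assumes "in_dual S N b" "a \<in> S"
  shows "summable (\<lambda>n. a n * b n)"
proof -
  obtain f K where f: "\<forall>a\<in>S. \<forall>a'\<in>S. f (\<lambda>j. a j + a' j) = f a + f a'"
    "\<forall>a\<in>S. \<forall>c. f (\<lambda>j. c * a j) = c * f a" "\<forall>a\<in>S. \<bar>f a\<bar> \<le> K * N a" "\<forall>n. f (unit_vec n) = b n"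
    by (rule in_dualE[OF assms(1)])
  show ?thesis using pairing[OF f assms(2)] by (rule sums_summable)
qed

lemma dual_bdd:
  assumes "in_dual S N b"
  shows "bdd_above ((\<lambda>a. \<bar>\<Sum>n. a n * b n\<bar>) ` {a\<in>S. N a \<le> 1})"
proof -
  obtain f K where f: "\<forall>a\<in>S. \<forall>a'\<in>S. f (\<lambda>j. a j + a' j) = f a + f a'"
    "\<forall>a\<in>S. \<forall>c. f (\<lambda>j. c * a j) = c * f a" "\<forall>a\<in>S. \<bar>f a\<bar> \<le> K * N a" "\<forall>n. f (unit_vec n) = b n"
    by (rule in_dualE[OF assms])
  have "\<bar>\<Sum>n. a n * b n\<bar> \<le> \<bar>K\<bar>" if "a \<in> S" "N a \<le> 1" for a
  proof -
    have "(\<Sum>n. a n * b n) = f a" using pairing[OF f that(1)] sums_unique by metis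
    moreover have "K * N a \<le> \<bar>K\<bar>"
    proof (cases "K \<ge> 0")
      case True then show ?thesis using that mult_left_mono[of "N a" 1 K] by simp
    next
      case False then show ?thesis using Nnn[OF that(1)] mult_nonpos_nonneg[of K "N a"] by simp
    qed
    ultimately show ?thesis using f(3) that by fastforce
  qed
  then show ?thesis unfolding bdd_above_def by blast
qed

lemma dual_nonneg: "in_dual S N b \<Longrightarrow> 0 \<le> dual_norm S N b"
  unfolding dual_norm_def
  by (rule order_trans[OF _ cSUP_upper[OF _ dual_bdd, of "\<lambda>j. 0"]]) (auto simp: S0 N0)

lemma dual_bound:
  assumes "in_dual S N b" "a \<in> S"
  shows "\<bar>\<Sum>n. a n * b n\<bar> \<le> dual_norm S N b * N a"
proof (cases "N a = 0")
  case True
  then have "a = (\<lambda>j. 0)" using Neq0 assms(2) by blast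
  then show ?thesis using dual_nonneg[OF assms(1)] by (simp add: N0)
next
  case False
  then have pos: "N a > 0" using Nnn[OF assms(2)] by simp
  define a' where "a' = (\<lambda>j. (1 / N a) * a j)"
  have a'S: "a' \<in> S" unfolding a'_def by (rule Ssc[OF assms(2)])
  have "N a' = \<bar>1 / N a\<bar> * N a" unfolding a'_def using Nsc[OF assms(2)] by blast
  then have "N a' = 1" using pos by simp
  then have "\<bar>\<Sum>n. a' n * b n\<bar> \<le> dual_norm S N b"
    unfolding dual_norm_def using a'S by (intro cSUP_upper[OF _ dual_bdd[OF assms(1)]]) auto
  moreover have "(\<Sum>n. a' n * b n) = (1 / N a) * (\<Sum>n. a n * b n)"
    unfolding a'_def using suminf_mult[OF dual_sums[OF assms], of "1 / N a"]
    by (simp add: mult.assoc)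
  ultimately have "\<bar>\<Sum>n. a n * b n\<bar> / N a \<le> dual_norm S N b"
    using pos by (simp add: abs_mult)
  then show ?thesis using pos by (metis pos_divide_le_eq)
qed

lemma dual_least:
  assumes "\<And>a. a \<in> S \<Longrightarrow> N a \<le> 1 \<Longrightarrow> \<bar>\<Sum>n. a n * b n\<bar> \<le> C"
  shows "dual_norm S N b \<le> C"
  unfolding dual_norm_def
proof (rule cSUP_least)
  show "{a \<in> S. N a \<le> 1} \<noteq> {}" using S0 N0 by auto
  fix a assume "a \<in> {a \<in> S. N a \<le> 1}"
  then show "\<bar>\<Sum>n. a n * b n\<bar> \<le> C" using assms by blast
qed

end


context seqsp
begin

definition dS where "dS a b = (if a \<in> S \<and> b \<in> S then N (\<lambda>j. a j - b j) else 0)"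

lemma MS: "Metric_space S dS"
proof
  fix x y show "0 \<le> dS x y" unfolding dS_def using Nnn Ssub by auto
next
  fix x y show "dS x y = dS y x" unfolding dS_def using Nsub_sym by auto
next
  fix x y assume "x \<in> S" "y \<in> S"
  then show "(dS x y = 0) = (x = y)" unfolding dS_def using Neq0[OF Ssub[of x y]]
    by (auto simp: fun_eq_iff)
next
  fix x y z assume "x \<in> S" "y \<in> S" "z \<in> S"
  then show "dS x z \<le> dS x y + dS y z" unfolding dS_def using Ntri3 by auto
qed

interpretation MS: Metric_space S dS by (rule MS)

lemma mcomplete: "MS.mcomplete"
  unfolding MS.mcomplete_def
proof (intro allI impI)
  fix \<sigma> assume "MS.MCauchy \<sigma>"
  then have rs: "\<And>n. \<sigma> n \<in> S" and C: "\<forall>\<epsilon>>0. \<exists>M. \<forall>n n'. M \<le> n \<longrightarrow> M \<le> n' \<longrightarrow> dS (\<sigma> n) (\<sigma> n') < \<epsilon>"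
    unfolding MS.MCauchy_def by auto
  have "\<forall>e>0. \<exists>M. \<forall>m\<ge>M. \<forall>k\<ge>M. N (\<lambda>j. \<sigma> m j - \<sigma> k j) < e"
    using C rs unfolding dS_def by simp
  then obtain a where a: "a \<in> S" and lim: "(\<lambda>k. N (\<lambda>j. \<sigma> k j - a j)) \<longlonglongrightarrow> 0"
    using Scomplete[of \<sigma>] rs by blast
  show "\<exists>x. limitin MS.mtopology \<sigma> x sequentially"
  proof (intro exI, unfold MS.limit_metric_sequentially, intro conjI allI impI)
    show "a \<in> S" by fact
    fix \<epsilon> :: real assume "\<epsilon> > 0"
    from LIMSEQ_D[OF lim this] obtain M where "\<forall>n\<ge>M. norm (N (\<lambda>j. \<sigma> n j - a j) - 0) < \<epsilon>" by blast
    then have "\<forall>n\<ge>M. N (\<lambda>j. \<sigma> n j - a j) < \<epsilon>" by (auto simp: abs_less_iff)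
    then show "\<exists>M. \<forall>n\<ge>M. \<sigma> n \<in> S \<and> dS (\<sigma> n) a < \<epsilon>"
      using rs a unfolding dS_def by auto
  qed
qed

lemma baire_S:
  assumes cl: "\<And>m::nat. closedin MS.mtopology (C m)" and cov: "\<Union>(range C) = S"
  shows "\<exists>m a0 r. a0 \<in> S \<and> r > 0 \<and> MS.mball a0 r \<subseteq> C m"
proof (rule ccontr)
  assume H: "\<not> ?thesis"
  have "MS.mtopology interior_of \<Union>(range C) = {}"
  proof (rule MS.metric_Baire_category_alt[OF mcomplete])
    show "countable (range C)" by simp
    fix T assume "T \<in> range C"
    then obtain m where T: "T = C m" by blast
    have "MS.mtopology interior_of (C m) = {}"
      using H MS.in_interior_of_mball by blast
    then show "closedin MS.mtopology T \<and> MS.mtopology interior_of T = {}"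
      using cl T by simp
  qed
  then have "S = {}" using cov interior_of_topspace[of MS.mtopology] by simp
  then show False using S0 by blast
qed

lemma trunc_bdd: "a \<in> S \<Longrightarrow> \<exists>M. \<forall>k. N (trunc_seq a k) \<le> M"
proof -
  assume a: "a \<in> S"
  have "convergent (\<lambda>k. N (\<lambda>j. a j - trunc_seq a k j))" using expand[OF a] by (auto simp: convergent_def)
  then obtain B where B: "\<And>k. norm (N (\<lambda>j. a j - trunc_seq a k j)) \<le> B"
    using convergent_imp_Bseq BseqE by metis
  have "N (trunc_seq a k) \<le> N a + B" for k
  proof -
    have "N (trunc_seq a k) \<le> N a + N (\<lambda>j. trunc_seq a k j - a j)" by (rule Nge[OF trunc_S a])
    also have "N (\<lambda>j. trunc_seq a k j - a j) = N (\<lambda>j. a j - trunc_seq a k j)" by (rule Nsub_sym[OF trunc_S a])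
    also have "\<dots> \<le> B" using B[of k] by simp
    finally show ?thesis by simp
  qed
  then show ?thesis by blast
qed

lemma approx:
  "\<exists>K\<ge>0. \<forall>h\<in>S. \<forall>\<epsilon>>0. \<exists>w\<in>S. (\<forall>k. N (trunc_seq w k) \<le> K * N h) \<and> N (\<lambda>j. h j - w j) < \<epsilon>"
proof -
  define E where "E m = {a \<in> S. \<forall>k. N (trunc_seq a k) \<le> real m}" for m :: nat
  define C where "C m = MS.mtopology closure_of (E m)" for m
  have ES: "E m \<subseteq> S" for m unfolding E_def by auto
  have "\<exists>m a0 r. a0 \<in> S \<and> r > 0 \<and> MS.mball a0 r \<subseteq> C m"
  proof (rule baire_S)
    show "closedin MS.mtopology (C m)" for m unfolding C_def by simp
    have "C m \<subseteq> S" for m unfolding C_def using closure_of_subset_topspace[of MS.mtopology] by simp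
    moreover have "\<exists>m. a \<in> C m" if aS: "a \<in> S" for a
    proof -
      obtain M where M: "\<forall>k. N (trunc_seq a k) \<le> M" using trunc_bdd[OF aS] by blast
      have "M \<le> real (nat \<lceil>M\<rceil>)" by linarith
      then have "a \<in> E (nat \<lceil>M\<rceil>)" unfolding E_def using aS M order_trans by blast
      moreover have "E (nat \<lceil>M\<rceil>) \<subseteq> C (nat \<lceil>M\<rceil>)" unfolding C_def
        using closure_of_subset[of "E (nat \<lceil>M\<rceil>)" MS.mtopology] ES by simp
      ultimately show ?thesis by blast
    qed
    ultimately show "\<Union>(range C) = S" by blast
  qed
  then obtain m a0 r where a0: "a0 \<in> S" and r: "r > 0" and B: "MS.mball a0 r \<subseteq> C m" by blast
  have inC: "\<exists>y\<in>E m. dS x y < \<epsilon>" if "x \<in> C m" "\<epsilon> > 0" for x \<epsilon>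
    using that unfolding C_def MS.metric_closure_of by auto
  have AL0: "\<exists>w\<in>S. (\<forall>k. N (trunc_seq w k) \<le> 2 * m) \<and> N (\<lambda>j. h j - w j) < \<epsilon>"
    if h: "h \<in> S" "N h < r" and e: "\<epsilon> > 0" for h \<epsilon>
  proof -
    have ah: "(\<lambda>j. a0 j + h j) \<in> S" using Sadd[OF a0 h(1)] .
    have "dS a0 (\<lambda>j. a0 j + h j) = N h"
      unfolding dS_def using a0 ah Nneg[OF h(1)] by simp
    then have "(\<lambda>j. a0 j + h j) \<in> MS.mball a0 r" using ah a0 h by simp
    then have "(\<lambda>j. a0 j + h j) \<in> C m" using B by blast
    then obtain u where u: "u \<in> E m" "dS (\<lambda>j. a0 j + h j) u < \<epsilon>/2" using inC e by (meson half_gt_zero)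
    have "dS a0 a0 = 0" unfolding dS_def using a0 N0 by simp
    then have "a0 \<in> MS.mball a0 r" using a0 r by simp
    then have "a0 \<in> C m" using B by blast
    then obtain v where v: "v \<in> E m" "dS a0 v < \<epsilon>/2" using inC e by (meson half_gt_zero)
    have uS: "u \<in> S" and vS: "v \<in> S" using u v ES by auto
    define w where "w = (\<lambda>j. u j - v j)"
    have wS: "w \<in> S" unfolding w_def by (rule Ssub[OF uS vS])
    have "N (trunc_seq w k) \<le> 2 * m" for k
    proof -
      have "N (trunc_seq w k) = N (\<lambda>j. trunc_seq u k j - trunc_seq v k j)"
        unfolding w_def trunc_diff ..
      also have "\<dots> \<le> N (trunc_seq u k) + N (trunc_seq v k)" by (rule Nsub_le[OF trunc_S trunc_S])
      also have "\<dots> \<le> 2 * m"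
      proof -
        have "N (trunc_seq u k) \<le> m" using u(1) unfolding E_def by blast
        moreover have "N (trunc_seq v k) \<le> m" using v(1) unfolding E_def by blast
        ultimately show ?thesis by linarith
      qed
      finally show ?thesis .
    qed
    moreover have "N (\<lambda>j. h j - w j) < \<epsilon>"
    proof -
      have "(\<lambda>j. h j - w j) = (\<lambda>j. (a0 j + h j - u j) - (a0 j - v j))" unfolding w_def by auto
      then have "N (\<lambda>j. h j - w j) \<le> N (\<lambda>j. a0 j + h j - u j) + N (\<lambda>j. a0 j - v j)"
        using Nsub_le[OF Ssub[OF ah uS] Ssub[OF a0 vS]] by simp
      moreover have "N (\<lambda>j. a0 j + h j - u j) < \<epsilon>/2" using u(2) ah uS unfolding dS_def by simp
      moreover have "N (\<lambda>j. a0 j - v j) < \<epsilon>/2" using v(2) a0 vS unfolding dS_def by simp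
      ultimately show ?thesis by simp
    qed
    ultimately show ?thesis using wS by blast
  qed
  show ?thesis
  proof (intro exI[of _ "4 * real m / r"] conjI ballI allI impI)
    show "0 \<le> 4 * real m / r" using r by simp
    fix h \<epsilon> assume h: "h \<in> S" and e: "(\<epsilon>::real) > 0"
    show "\<exists>w\<in>S. (\<forall>k. N (trunc_seq w k) \<le> 4 * real m / r * N h) \<and> N (\<lambda>j. h j - w j) < \<epsilon>"
    proof (cases "N h = 0")
      case True
      then have "h = (\<lambda>j. 0)" using Neq0 h by blast
      then show ?thesis using S0 N0 e by (intro bexI[of _ "\<lambda>j. 0"]) (auto simp: trunc_eq)
    next
      case False
      then have hp: "N h > 0" using Nnn[OF h] by simp
      define l where "l = r / (2 * N h)"
      have l: "l > 0" unfolding l_def using r hp by simp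
      define h' where "h' = (\<lambda>j. l * h j)"
      have h'S: "h' \<in> S" unfolding h'_def by (rule Ssc[OF h])
      have "N h' = l * N h" unfolding h'_def using Nsc[OF h] l by simp
      also have "\<dots> = r / 2" unfolding l_def using hp by simp
      finally have "N h' < r" using r by simp
      then obtain w' where w': "w' \<in> S" "\<forall>k. N (trunc_seq w' k) \<le> 2 * m" "N (\<lambda>j. h' j - w' j) < \<epsilon> * l"
        using AL0[OF h'S _ mult_pos_pos[OF e l]] by blast
      define w where "w = (\<lambda>j. (1/l) * w' j)"
      have wS: "w \<in> S" unfolding w_def by (rule Ssc[OF w'(1)])
      have "N (trunc_seq w k) \<le> 4 * real m / r * N h" for k
      proof -
        have "N (trunc_seq w k) = N (\<lambda>j. (1/l) * trunc_seq w' k j)" unfolding w_def trunc_sc ..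
        also have "\<dots> = \<bar>1/l\<bar> * N (trunc_seq w' k)" by (rule Nsc[OF trunc_S])
        also have "\<dots> = (1/l) * N (trunc_seq w' k)" using l by simp
        also have "\<dots> \<le> (1/l) * (2 * m)" using w'(2) l by (simp add: divide_right_mono)
        also have "\<dots> = 4 * real m / r * N h" unfolding l_def using r hp by (simp add: field_simps)
        finally show ?thesis .
      qed
      moreover have "N (\<lambda>j. h j - w j) < \<epsilon>"
      proof -
        have "(\<lambda>j. h j - w j) = (\<lambda>j. (1/l) * (h' j - w' j))" unfolding w_def h'_def using l
          by (auto simp: field_simps)
        then have "N (\<lambda>j. h j - w j) = \<bar>1/l\<bar> * N (\<lambda>j. h' j - w' j)"
          using Nsc[OF Ssub[OF h'S w'(1)], of "1/l"] by simp
        also have "\<dots> = (1/l) * N (\<lambda>j. h' j - w' j)" using l by simp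
        also have "\<dots> < (1/l) * (\<epsilon> * l)" using w'(3) l by (intro mult_strict_left_mono) simp_all
        also have "\<dots> = \<epsilon>" using l by simp
        finally show ?thesis .
      qed
      ultimately show ?thesis using wS by blast
    qed
  qed
qed

end


context seqsp
begin

lemma basis_const: "\<exists>K. \<forall>a\<in>S. \<forall>k. N (trunc_seq a k) \<le> K * N a"
proof -
  obtain K where K0: "K \<ge> 0" and KA: "\<forall>h\<in>S. \<forall>\<epsilon>>0. \<exists>w\<in>S. (\<forall>k. N (trunc_seq w k) \<le> K * N h) \<and> N (\<lambda>j. h j - w j) < \<epsilon>"
    using approx by blast
  have "\<forall>p. \<exists>w. fst p \<in> S \<longrightarrow> snd p > 0 \<longrightarrow> w \<in> S \<and> (\<forall>k. N (trunc_seq w k) \<le> K * N (fst p)) \<and> N (\<lambda>j. fst p j - w j) < snd p"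
    using KA by blast
  from choice[OF this] obtain W where W: "\<And>h \<epsilon>. h \<in> S \<Longrightarrow> \<epsilon> > 0 \<Longrightarrow> W (h,\<epsilon>) \<in> S \<and> (\<forall>k. N (trunc_seq (W (h,\<epsilon>)) k) \<le> K * N h) \<and> N (\<lambda>j. h j - W (h,\<epsilon>) j) < \<epsilon>"
    by fastforce
  have main: "N (trunc_seq h k) \<le> 2 * K * N h" if h: "h \<in> S" for h k
  proof (cases "N h = 0")
    case True
    then have "h = (\<lambda>j. 0)" using Neq0 h by blast
    then show ?thesis using N0 by (simp add: trunc_eq)
  next
    case False
    then have hp: "N h > 0" using Nnn[OF h] by simp
    define e where "e i = N h / 2 ^ Suc i" for i :: nat
    have e: "e i > 0" for i unfolding e_def using hp by simp
    define rr where "rr = rec_nat h (\<lambda>i r. (\<lambda>j. r j - W (r, e i) j))"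
    have rr0: "rr 0 = h" unfolding rr_def by simp
    have rrS_eq: "rr (Suc i) = (\<lambda>j. rr i j - W (rr i, e i) j)" for i unfolding rr_def by simp
    define w where "w i = W (rr i, e i)" for i
    have rrS: "rr i \<in> S" for i
    proof (induction i)
      case 0 then show ?case using rr0 h by simp
    next
      case (Suc i) then show ?case unfolding rrS_eq using W[OF Suc e] Ssub by blast
    qed
    have wS: "w i \<in> S" for i unfolding w_def using W[OF rrS e] by blast
    have rrN: "N (rr i) \<le> N h / 2^i" for i
    proof (cases i)
      case 0 then show ?thesis using rr0 by simp
    next
      case (Suc i')
      have "N (rr (Suc i')) < e i'" unfolding rrS_eq using W[OF rrS e] by blast
      then show ?thesis using Suc unfolding e_def by simp
    qed
    have wt: "N (trunc_seq (w i) k) \<le> K * (N h / 2^i)" for i k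
    proof -
      have "N (trunc_seq (w i) k) \<le> K * N (rr i)" unfolding w_def using W[OF rrS e] by blast
      also have "\<dots> \<le> K * (N h / 2^i)" using rrN K0 by (intro mult_left_mono) auto
      finally show ?thesis .
    qed
    define s where "s J = (\<lambda>n. \<Sum>i<J. w i n)" for J
    have s_eq: "s J = (\<lambda>j. h j - rr J j)" for J
    proof (induction J)
      case 0 then show ?case unfolding s_def using rr0 by simp
    next
      case (Suc J)
      have "s (Suc J) = (\<lambda>n. s J n + w J n)" unfolding s_def by simp
      also have "\<dots> = (\<lambda>j. h j - rr (Suc J) j)" unfolding Suc rrS_eq w_def by auto
      finally show ?case .
    qed
    have sS: "s J \<in> S" for J unfolding s_eq by (rule Ssub[OF h rrS])
    have hs: "N (\<lambda>j. h j - s J j) \<le> N h / 2^J" for J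
      unfolding s_eq using rrN by simp
    have tail: "N (trunc_seq (\<lambda>n. s J n - s j n) k) \<le> 2*K*N h / 2^j - 2*K*N h / 2^J" if "j \<le> J" for j J k
      using that
    proof (induction J rule: dec_induct)
      case base then show ?case using N0 by (simp add: trunc_eq)
    next
      case (step J)
      have "(\<lambda>n. s (Suc J) n - s j n) = (\<lambda>n. (s J n - s j n) + w J n)" unfolding s_def by auto
      then have "trunc_seq (\<lambda>n. s (Suc J) n - s j n) k = (\<lambda>i. trunc_seq (\<lambda>n. s J n - s j n) k i + trunc_seq (w J) k i)"
        by (simp add: trunc_add)
      then have "N (trunc_seq (\<lambda>n. s (Suc J) n - s j n) k) \<le> N (trunc_seq (\<lambda>n. s J n - s j n) k) + N (trunc_seq (w J) k)"
        using Ntri[OF trunc_S trunc_S] by simp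
      also have "\<dots> \<le> (2*K*N h / 2^j - 2*K*N h / 2^J) + K * (N h / 2^J)"
        using step.IH wt by (intro add_mono) auto
      also have "\<dots> = 2*K*N h / 2^j - 2*K*N h / 2^(Suc J)" by (simp add: field_simps)
      finally show ?case .
    qed
    have s0: "s 0 = (\<lambda>n. 0)" unfolding s_def by simp
    have coord: "\<bar>w i n\<bar> \<le> (2 * K * N h / N (unit_vec n)) * (1/2)^i" for i n
    proof -
      have eq: "(\<lambda>j. trunc_seq (w i) (Suc n) j - trunc_seq (w i) n j) = (\<lambda>j. w i n * unit_vec n j)"
        unfolding trunc_Suc by simp
      have "\<bar>w i n\<bar> * N (unit_vec n) = N (\<lambda>j. w i n * unit_vec n j)" using Nsc[OF ue] by simp
      also have "\<dots> \<le> N (trunc_seq (w i) (Suc n)) + N (trunc_seq (w i) n)"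
        unfolding eq[symmetric] by (rule Nsub_le[OF trunc_S trunc_S])
      also have "\<dots> \<le> K * (N h / 2^i) + K * (N h / 2^i)" using wt by (intro add_mono) auto
      also have "\<dots> = 2 * K * N h * (1/2)^i" by (simp add: power_one_over field_simps)
      finally show ?thesis using Nue[of n] by (simp add: field_simps)
    qed
    have summ: "summable (\<lambda>i. w i n)" for n
    proof (rule summable_comparison_test')
      show "summable (\<lambda>i. (2 * K * N h / N (unit_vec n)) * (1/2::real)^i)"
        by (intro summable_mult summable_geometric) simp
      show "norm (w i n) \<le> (2 * K * N h / N (unit_vec n)) * (1/2)^i" for i using coord by simp
    qed
    define c where "c n = (\<Sum>i. w i n)" for n
    have sconv: "(\<lambda>J. s J n) \<longlonglongrightarrow> c n" for n
      unfolding s_def c_def using summable_LIMSEQ[OF summ] by simp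
    have dconv: "(\<lambda>J. s J n - s j n) \<longlonglongrightarrow> c n - s j n" for j n
      by (intro tendsto_intros sconv)
    have Bd: "N (trunc_seq (\<lambda>n. c n - s j n) k) \<le> 2*K*N h / 2^j" for j k
    proof (rule trunc_limit_bound[of "\<lambda>J n. s J n - s j n", OF dconv])
      fix J assume "J \<ge> j"
      then have "N (trunc_seq (\<lambda>n. s J n - s j n) k) \<le> 2*K*N h / 2^j - 2*K*N h / 2^J" by (rule tail)
      also have "\<dots> \<le> 2*K*N h / 2^j" using K0 hp by simp
      finally show "N (trunc_seq (\<lambda>n. s J n - s j n) k) \<le> 2*K*N h / 2^j" .
    qed
    have Bc: "N (trunc_seq c k) \<le> 2*K*N h"
      using Bd[of 0 k] s0 by simp
    have "c = h"
    proof (rule uniq[OF h], rule LIMSEQ_I)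
      fix \<epsilon> :: real assume ep: "\<epsilon> > 0"
      obtain j where j: "3 * ((2*K+1) * N h) / \<epsilon> < 2^j"
        using real_arch_pow[of 2] by auto
      have jj: "(2*K+1) * N h / 2^j < \<epsilon> / 3"
        using j ep by (simp add: field_simps)
      have "(\<lambda>k. N (\<lambda>i. s j i - trunc_seq (s j) k i)) \<longlonglongrightarrow> 0" by (rule expand[OF sS])
      from LIMSEQ_D[OF this, of "\<epsilon>/3"] ep obtain k0 where
        k0: "\<forall>k\<ge>k0. norm (N (\<lambda>i. s j i - trunc_seq (s j) k i) - 0) < \<epsilon>/3" by auto
      show "\<exists>no. \<forall>k\<ge>no. norm (N (\<lambda>i. h i - trunc_seq c k i) - 0) < \<epsilon>"
      proof (intro exI allI impI)
        fix k assume "k0 \<le> k"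
        then have A: "N (\<lambda>i. s j i - trunc_seq (s j) k i) < \<epsilon>/3" using k0 by auto
        have B: "N (\<lambda>i. trunc_seq (s j) k i - trunc_seq c k i) \<le> 2*K*N h / 2^j"
        proof -
          have "N (\<lambda>i. trunc_seq (s j) k i - trunc_seq c k i) = N (\<lambda>i. trunc_seq c k i - trunc_seq (s j) k i)"
            by (rule Nsub_sym[OF trunc_S trunc_S])
          also have "\<dots> = N (trunc_seq (\<lambda>n. c n - s j n) k)" by (simp add: trunc_diff)
          finally show ?thesis using Bd by simp
        qed
        have "N (\<lambda>i. h i - trunc_seq c k i) \<le> N (\<lambda>i. h i - s j i) + N (\<lambda>i. s j i - trunc_seq c k i)"
          by (rule Ntri3[OF h sS trunc_S])
        also have "N (\<lambda>i. s j i - trunc_seq c k i) \<le> N (\<lambda>i. s j i - trunc_seq (s j) k i) + N (\<lambda>i. trunc_seq (s j) k i - trunc_seq c k i)"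
          by (rule Ntri3[OF sS trunc_S trunc_S])
        finally have "N (\<lambda>i. h i - trunc_seq c k i) \<le> N h / 2^j + \<epsilon>/3 + 2*K*N h / 2^j"
          using hs[of j] A B by linarith
        also have "N h / 2^j + \<epsilon>/3 + 2*K*N h / 2^j = (2*K+1) * N h / 2^j + \<epsilon>/3"
          by (simp add: field_simps)
        also have "\<dots> < \<epsilon>"
        proof -
          have gen: "x < \<epsilon>/3 \<Longrightarrow> x + \<epsilon>/3 < \<epsilon>" for x :: real using ep by linarith
          show ?thesis by (rule gen[OF jj])
        qed
        finally have "N (\<lambda>i. h i - trunc_seq c k i) < \<epsilon>" .
        moreover have "N (\<lambda>i. h i - trunc_seq c k i) \<ge> 0" by (rule Nnn[OF Ssub[OF h trunc_S]])
        ultimately show "norm (N (\<lambda>i. h i - trunc_seq c k i) - 0) < \<epsilon>" by simp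
      qed
    qed
    then show ?thesis using Bc by simp
  qed
  then show ?thesis by blast
qed

lemma coord_bound: "\<exists>C. \<forall>a\<in>S. \<bar>a n\<bar> \<le> C * N a"
proof -
  obtain K where K: "\<forall>a\<in>S. \<forall>k. N (trunc_seq a k) \<le> K * N a" using basis_const by blast
  have "\<bar>a n\<bar> \<le> (2 * K / N (unit_vec n)) * N a" if a: "a \<in> S" for a
  proof -
    have eq: "(\<lambda>j. trunc_seq a (Suc n) j - trunc_seq a n j) = (\<lambda>j. a n * unit_vec n j)"
      unfolding trunc_Suc by simp
    have "\<bar>a n\<bar> * N (unit_vec n) = N (\<lambda>j. a n * unit_vec n j)" using Nsc[OF ue] by simp
    also have "\<dots> \<le> N (trunc_seq a (Suc n)) + N (trunc_seq a n)"
      unfolding eq[symmetric] by (rule Nsub_le[OF trunc_S trunc_S])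
    also have "\<dots> \<le> K * N a + K * N a" using K a by (intro add_mono) auto
    finally show ?thesis using Nue[of n] by (simp add: field_simps)
  qed
  then show ?thesis by blast
qed

lemma dual_trunc:
  assumes "in_dual S N b"
  shows "in_dual S N (\<lambda>j. b j - trunc_seq b k j)"
proof -
  obtain f K where f: "\<forall>a\<in>S. \<forall>a'\<in>S. f (\<lambda>j. a j + a' j) = f a + f a'"
    "\<forall>a\<in>S. \<forall>c. f (\<lambda>j. c * a j) = c * f a" "\<forall>a\<in>S. \<bar>f a\<bar> \<le> K * N a" "\<forall>n. f (unit_vec n) = b n"
    by (rule in_dualE[OF assms])
  have "\<forall>n. \<exists>C. \<forall>a\<in>S. \<bar>a n\<bar> \<le> C * N a" using coord_bound by blast
  from choice[OF this] obtain Cc where Cc0: "\<forall>n. \<forall>a\<in>S. \<bar>a n\<bar> \<le> Cc n * N a"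
    by blast
  then have Cc: "\<And>n a. a \<in> S \<Longrightarrow> \<bar>a n\<bar> \<le> Cc n * N a" by blast
  define g where "g a = f a - (\<Sum>n<k. a n * b n)" for a
  show ?thesis
    unfolding in_dual_def
  proof (intro exI[of _ g] conjI ballI allI)
    fix a a' assume "a \<in> S" "a' \<in> S"
    then show "g (\<lambda>j. a j + a' j) = g a + g a'"
      unfolding g_def using f(1) by (simp add: distrib_right sum.distrib)
  next
    fix a c assume "a \<in> S"
    then show "g (\<lambda>j. c * a j) = c * g a"
      unfolding g_def using f(2) by (simp add: sum_distrib_left right_diff_distrib mult.assoc)
  next
    show "\<exists>K. \<forall>a\<in>S. \<bar>g a\<bar> \<le> K * N a"
    proof (intro exI ballI)
      fix a assume a: "a \<in> S"
      have "\<bar>\<Sum>n<k. a n * b n\<bar> \<le> (\<Sum>n<k. \<bar>a n\<bar> * \<bar>b n\<bar>)"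
        using sum_abs[of "\<lambda>n. a n * b n"] by (simp add: abs_mult)
      also have "\<dots> \<le> (\<Sum>n<k. Cc n * N a * \<bar>b n\<bar>)"
        using Cc[OF a] by (intro sum_mono mult_right_mono) auto
      also have "\<dots> = (\<Sum>n<k. Cc n * \<bar>b n\<bar>) * N a"
        by (simp add: sum_distrib_left mult_ac)
      finally have "\<bar>\<Sum>n<k. a n * b n\<bar> \<le> (\<Sum>n<k. Cc n * \<bar>b n\<bar>) * N a" .
      moreover have "\<bar>f a\<bar> \<le> K * N a" using f(3) a by blast
      ultimately show "\<bar>g a\<bar> \<le> (K + (\<Sum>n<k. Cc n * \<bar>b n\<bar>)) * N a"
        unfolding g_def by (simp add: distrib_right)
    qed
  next
    fix m
    have "(\<Sum>n<k. unit_vec m n * b n) = (if m < k then b m else 0)"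
      unfolding unit_vec_def by (simp add: if_distrib[of "\<lambda>x. x * _"] sum.delta' cong: if_cong)
    then show "g (unit_vec m) = b m - trunc_seq b k m"
      unfolding g_def using f(4) by (simp add: trunc_eq)
  qed
qed

end


theorem theorem5:
  fixes S :: "(nat \<Rightarrow> real) set" and N :: "(nat \<Rightarrow> real) \<Rightarrow> real"
    and x :: "nat \<Rightarrow> 'a::banach" and y :: "nat \<Rightarrow> ('a \<Rightarrow>\<^sub>L real)"
  assumes "seq_banach S N"
    and "unit_vectors_basis S N"
    and "coord_functionals_basis S N"
    and "\<forall>g::'a \<Rightarrow>\<^sub>L real. in_dual S N (\<lambda>n. blinfun_apply g (x n))"
    and "\<forall>z. (\<lambda>n. blinfun_apply (y n) z) \<in> S"
    and "\<forall>z. (\<lambda>n. blinfun_apply (y n) z *\<^sub>R x n) sums z"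
  shows "is_cross_frame S N x y"
proof -
  interpret seqsp S N using assms(1,2) by unfold_locales
  have TS: "\<And>z. (\<lambda>n. blinfun_apply (y n) z) \<in> S" using assms(5) by blast
  have bD: "\<And>g::'a \<Rightarrow>\<^sub>L real. in_dual S N (\<lambda>n. blinfun_apply g (x n))" using assms(4) by blast
  have gz: "(\<lambda>n. blinfun_apply (y n) z * blinfun_apply g (x n)) sums blinfun_apply g z" for g :: "'a \<Rightarrow>\<^sub>L real" and z
  proof -
    have "(\<lambda>n. blinfun_apply g (blinfun_apply (y n) z *\<^sub>R x n)) sums blinfun_apply g z"
      by (rule bounded_linear.sums[OF blinfun.bounded_linear_right assms(6)[rule_format]])
    then show ?thesis by (simp add: blinfun.scaleR_right)
  qed
  have gz_eq: "blinfun_apply g z = (\<Sum>n. blinfun_apply (y n) z * blinfun_apply g (x n))" for g :: "'a \<Rightarrow>\<^sub>L real" and z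
    using sums_unique[OF gz] .
  have gz_bound: "\<bar>blinfun_apply g z\<bar> \<le> dual_norm S N (\<lambda>n. blinfun_apply g (x n)) * N (\<lambda>n. blinfun_apply (y n) z)"
    for g :: "'a \<Rightarrow>\<^sub>L real" and z
    unfolding gz_eq[of g z] by (rule dual_bound[OF bD TS])

  obtain Kb where Kb: "\<forall>a\<in>S. \<forall>k. N (trunc_seq a k) \<le> Kb * N a" using basis_const by blast
  have "\<exists>C>0. \<forall>k (z::'a). N (trunc_seq (\<lambda>n. blinfun_apply (y n) z) k) \<le> C * norm z"
  proof (rule ubp)
    fix k m
    show "closed {z::'a. N (trunc_seq (\<lambda>n. blinfun_apply (y n) z) k) \<le> m}"
      unfolding closed_sequential_limits
    proof (intro allI impI, elim conjE)
      fix zs l assume zs: "\<forall>n. zs n \<in> {z::'a. N (trunc_seq (\<lambda>n. blinfun_apply (y n) z) k) \<le> m}" and l: "zs \<longlonglongrightarrow> l"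
      have "(\<lambda>j. N (trunc_seq (\<lambda>n. blinfun_apply (y n) (zs j)) k)) \<longlonglongrightarrow> N (trunc_seq (\<lambda>n. blinfun_apply (y n) l) k)"
        by (rule trunc_tendsto) (intro blinfun.tendsto tendsto_const l)
      then have "N (trunc_seq (\<lambda>n. blinfun_apply (y n) l) k) \<le> m"
        by (rule LIMSEQ_le_const2) (use zs in auto)
      then show "l \<in> {z::'a. N (trunc_seq (\<lambda>n. blinfun_apply (y n) z) k) \<le> m}" by simp
    qed
  next
    fix k and z1 z2 :: 'a
    have "trunc_seq (\<lambda>n. blinfun_apply (y n) (z1 - z2)) k = (\<lambda>j. trunc_seq (\<lambda>n. blinfun_apply (y n) z1) k j - trunc_seq (\<lambda>n. blinfun_apply (y n) z2) k j)"
      by (simp add: trunc_diff blinfun.diff_right)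
    then show "N (trunc_seq (\<lambda>n. blinfun_apply (y n) (z1 - z2)) k) \<le> N (trunc_seq (\<lambda>n. blinfun_apply (y n) z1) k) + N (trunc_seq (\<lambda>n. blinfun_apply (y n) z2) k)"
      using Nsub_le[OF trunc_S trunc_S] by simp
  next
    fix k c and z :: 'a
    have "trunc_seq (\<lambda>n. blinfun_apply (y n) (c *\<^sub>R z)) k = (\<lambda>j. c * trunc_seq (\<lambda>n. blinfun_apply (y n) z) k j)"
      by (simp add: trunc_sc blinfun.scaleR_right)
    then show "N (trunc_seq (\<lambda>n. blinfun_apply (y n) (c *\<^sub>R z)) k) = \<bar>c\<bar> * N (trunc_seq (\<lambda>n. blinfun_apply (y n) z) k)"
      using Nsc[OF trunc_S] by simp
  next
    fix z :: 'a
    show "\<exists>M. \<forall>k. N (trunc_seq (\<lambda>n. blinfun_apply (y n) z) k) \<le> M"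
      using Kb TS by blast
  qed
  then obtain B1 where B1: "B1 > 0" and B1t: "\<And>k z. N (trunc_seq (\<lambda>n. blinfun_apply (y n) z) k) \<le> B1 * norm z"
    by blast
  have frame_up: "N (\<lambda>n. blinfun_apply (y n) z) \<le> B1 * norm z" for z
  proof -
    let ?a = "\<lambda>n. blinfun_apply (y n) z"
    have "(\<lambda>k. B1 * norm z + N (\<lambda>j. ?a j - trunc_seq ?a k j)) \<longlonglongrightarrow> B1 * norm z + 0"
      by (intro tendsto_intros expand[OF TS])
    moreover have "N ?a \<le> B1 * norm z + N (\<lambda>j. ?a j - trunc_seq ?a k j)" for k
    proof -
      have "N ?a \<le> N (trunc_seq ?a k) + N (\<lambda>j. ?a j - trunc_seq ?a k j)" by (rule Nge[OF TS trunc_S])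
      then show ?thesis using B1t[where k=k and z=z] by linarith
    qed
    ultimately show ?thesis using LIMSEQ_le_const by fastforce
  qed

  have La_lin: "(\<Sum>n. a n * blinfun_apply (g1 - g2) (x n)) = (\<Sum>n. a n * blinfun_apply g1 (x n)) - (\<Sum>n. a n * blinfun_apply g2 (x n))"
    if a: "a \<in> S" for a and g1 g2 :: "'a \<Rightarrow>\<^sub>L real"
    using suminf_diff[OF dual_sums[OF bD a] dual_sums[OF bD a]]
    by (simp add: blinfun.diff_left right_diff_distrib)
  have La_sc: "(\<Sum>n. a n * blinfun_apply (c *\<^sub>R g) (x n)) = c * (\<Sum>n. a n * blinfun_apply g (x n))"
    if a: "a \<in> S" for a c and g :: "'a \<Rightarrow>\<^sub>L real"
    using suminf_mult[OF dual_sums[OF bD a], of c]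
    by (simp add: blinfun.scaleR_left mult_ac)
  have La: "\<exists>C. \<forall>g::'a \<Rightarrow>\<^sub>L real. \<bar>\<Sum>n. a n * blinfun_apply g (x n)\<bar> \<le> C * norm g" if a: "a \<in> S" for a
  proof -
    have "\<exists>C>0. \<forall>k (g::'a \<Rightarrow>\<^sub>L real). \<bar>\<Sum>n<k. a n * blinfun_apply g (x n)\<bar> \<le> C * norm g"
    proof (rule ubp)
      fix k m
      have cont: "continuous_on UNIV (\<lambda>g::'a \<Rightarrow>\<^sub>L real. \<bar>\<Sum>n<k. a n * blinfun_apply g (x n)\<bar>)"
        by (intro continuous_intros)
      show "closed {g::'a \<Rightarrow>\<^sub>L real. \<bar>\<Sum>n<k. a n * blinfun_apply g (x n)\<bar> \<le> m}"
        by (rule closed_Collect_le[OF cont continuous_on_const])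
    next
      fix k and g1 g2 :: "'a \<Rightarrow>\<^sub>L real"
      show "\<bar>\<Sum>n<k. a n * blinfun_apply (g1 - g2) (x n)\<bar> \<le> \<bar>\<Sum>n<k. a n * blinfun_apply g1 (x n)\<bar> + \<bar>\<Sum>n<k. a n * blinfun_apply g2 (x n)\<bar>"
        by (simp add: blinfun.diff_left right_diff_distrib sum_subtractf)
    next
      fix k c and g :: "'a \<Rightarrow>\<^sub>L real"
      show "\<bar>\<Sum>n<k. a n * blinfun_apply (c *\<^sub>R g) (x n)\<bar> = \<bar>c\<bar> * \<bar>\<Sum>n<k. a n * blinfun_apply g (x n)\<bar>"
        by (simp add: blinfun.scaleR_left sum_distrib_left abs_mult[symmetric] mult_ac)
    next
      fix g :: "'a \<Rightarrow>\<^sub>L real"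
      have "convergent (\<lambda>k. \<Sum>n<k. a n * blinfun_apply g (x n))"
        using summable_LIMSEQ[OF dual_sums[OF bD a]] by (auto simp: convergent_def)
      then obtain M where "\<And>k. norm (\<Sum>n<k. a n * blinfun_apply g (x n)) \<le> M"
        using convergent_imp_Bseq BseqE by metis
      then show "\<exists>M. \<forall>k. \<bar>\<Sum>n<k. a n * blinfun_apply g (x n)\<bar> \<le> M" by auto
    qed
    then obtain C where C: "\<And>k g. \<bar>\<Sum>n<k. a n * blinfun_apply g (x n)\<bar> \<le> C * norm (g::'a \<Rightarrow>\<^sub>L real)" by blast
    have "\<bar>\<Sum>n. a n * blinfun_apply g (x n)\<bar> \<le> C * norm g" for g :: "'a \<Rightarrow>\<^sub>L real"
    proof -
      have "(\<lambda>k. \<bar>\<Sum>n<k. a n * blinfun_apply g (x n)\<bar>) \<longlonglongrightarrow> \<bar>\<Sum>n. a n * blinfun_apply g (x n)\<bar>"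
        by (intro tendsto_intros summable_LIMSEQ dual_sums[OF bD a])
      then show ?thesis by (rule LIMSEQ_le_const2) (use C in auto)
    qed
    then show ?thesis by blast
  qed
  have "\<forall>a. \<exists>C. a \<in> S \<longrightarrow> (\<forall>g::'a \<Rightarrow>\<^sub>L real. \<bar>\<Sum>n. a n * blinfun_apply g (x n)\<bar> \<le> C * norm g)"
    using La by blast
  from choice[OF this] obtain Ca where Ca: "\<And>a g. a \<in> S \<Longrightarrow> \<bar>\<Sum>n. a n * blinfun_apply g (x n)\<bar> \<le> Ca a * norm (g::'a \<Rightarrow>\<^sub>L real)"
    by blast

  have "\<exists>C>0. \<forall>a (g::'a \<Rightarrow>\<^sub>L real). (if a \<in> S \<and> N a \<le> 1 then \<bar>\<Sum>n. a n * blinfun_apply g (x n)\<bar> else 0) \<le> C * norm g"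
  proof (rule ubp)
    fix a and m :: real
    show "closed {g::'a \<Rightarrow>\<^sub>L real. (if a \<in> S \<and> N a \<le> 1 then \<bar>\<Sum>n. a n * blinfun_apply g (x n)\<bar> else 0) \<le> m}"
    proof (cases "a \<in> S \<and> N a \<le> 1")
      case False then show ?thesis by (cases "0 \<le> m") auto
    next
      case True
      then have a: "a \<in> S" by simp
      show ?thesis
        unfolding closed_sequential_limits
      proof (intro allI impI, elim conjE)
        fix gs g assume gs: "\<forall>j. gs j \<in> {g::'a \<Rightarrow>\<^sub>L real. (if a \<in> S \<and> N a \<le> 1 then \<bar>\<Sum>n. a n * blinfun_apply g (x n)\<bar> else 0) \<le> m}"
          and lim: "gs \<longlonglongrightarrow> g"
        have "(\<lambda>j. (\<Sum>n. a n * blinfun_apply (gs j) (x n)) - (\<Sum>n. a n * blinfun_apply g (x n))) \<longlonglongrightarrow> 0"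
        proof (rule Lim_null_comparison)
          show "\<forall>\<^sub>F j in sequentially. norm ((\<Sum>n. a n * blinfun_apply (gs j) (x n)) - (\<Sum>n. a n * blinfun_apply g (x n))) \<le> Ca a * norm (gs j - g)"
            using Ca[OF a] La_lin[OF a] by (intro always_eventually allI) (metis real_norm_def)
          have "(\<lambda>j. norm (gs j - g)) \<longlonglongrightarrow> 0" using lim by (simp add: tendsto_norm_zero_iff LIM_zero_iff)
          then show "(\<lambda>j. Ca a * norm (gs j - g)) \<longlonglongrightarrow> 0" by (rule tendsto_mult_right_zero)
        qed
        then have "(\<lambda>j. \<Sum>n. a n * blinfun_apply (gs j) (x n)) \<longlonglongrightarrow> (\<Sum>n. a n * blinfun_apply g (x n))"
          by (simp add: LIM_zero_iff)
        then have "(\<lambda>j. \<bar>\<Sum>n. a n * blinfun_apply (gs j) (x n)\<bar>) \<longlonglongrightarrow> \<bar>\<Sum>n. a n * blinfun_apply g (x n)\<bar>"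
          by (rule tendsto_rabs)
        then have "\<bar>\<Sum>n. a n * blinfun_apply g (x n)\<bar> \<le> m"
          by (rule LIMSEQ_le_const2) (use gs True in auto)
        then show "g \<in> {g::'a \<Rightarrow>\<^sub>L real. (if a \<in> S \<and> N a \<le> 1 then \<bar>\<Sum>n. a n * blinfun_apply g (x n)\<bar> else 0) \<le> m}"
          using True by simp
      qed
    qed
  next
    fix a and g1 g2 :: "'a \<Rightarrow>\<^sub>L real"
    show "(if a \<in> S \<and> N a \<le> 1 then \<bar>\<Sum>n. a n * blinfun_apply (g1 - g2) (x n)\<bar> else 0)
        \<le> (if a \<in> S \<and> N a \<le> 1 then \<bar>\<Sum>n. a n * blinfun_apply g1 (x n)\<bar> else 0) + (if a \<in> S \<and> N a \<le> 1 then \<bar>\<Sum>n. a n * blinfun_apply g2 (x n)\<bar> else 0)"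
      using La_lin by auto
  next
    fix a c and g :: "'a \<Rightarrow>\<^sub>L real"
    show "(if a \<in> S \<and> N a \<le> 1 then \<bar>\<Sum>n. a n * blinfun_apply (c *\<^sub>R g) (x n)\<bar> else 0) = \<bar>c\<bar> * (if a \<in> S \<and> N a \<le> 1 then \<bar>\<Sum>n. a n * blinfun_apply g (x n)\<bar> else 0)"
      using La_sc by (auto simp: abs_mult)
  next
    fix g :: "'a \<Rightarrow>\<^sub>L real"
    have "(if a \<in> S \<and> N a \<le> 1 then \<bar>\<Sum>n. a n * blinfun_apply g (x n)\<bar> else 0) \<le> dual_norm S N (\<lambda>n. blinfun_apply g (x n))" for a
    proof (cases "a \<in> S \<and> N a \<le> 1")
      case True
      then have "\<bar>\<Sum>n. a n * blinfun_apply g (x n)\<bar> \<le> dual_norm S N (\<lambda>n. blinfun_apply g (x n)) * N a"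
        using dual_bound[OF bD] by blast
      also have "\<dots> \<le> dual_norm S N (\<lambda>n. blinfun_apply g (x n))"
        using True dual_nonneg[OF bD] by (simp add: mult_left_le)
      finally show ?thesis using True by simp
    qed (use dual_nonneg[OF bD] in auto)
    then show "\<exists>M. \<forall>a. (if a \<in> S \<and> N a \<le> 1 then \<bar>\<Sum>n. a n * blinfun_apply g (x n)\<bar> else 0) \<le> M" by blast
  qed
  then obtain B2 where B2: "B2 > 0" and B2a: "\<And>a g. (if a \<in> S \<and> N a \<le> 1 then \<bar>\<Sum>n. a n * blinfun_apply g (x n)\<bar> else 0) \<le> B2 * norm (g::'a \<Rightarrow>\<^sub>L real)"
    by blast
  have coframe_up: "dual_norm S N (\<lambda>n. blinfun_apply g (x n)) \<le> B2 * norm g" for g :: "'a \<Rightarrow>\<^sub>L real"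
  proof (rule dual_least)
    fix a assume "a \<in> S" "N a \<le> 1"
    then show "\<bar>\<Sum>n. a n * blinfun_apply g (x n)\<bar> \<le> B2 * norm g" using B2a[of a g] by simp
  qed

  have frame_low: "(1/B2) * norm z \<le> N (\<lambda>n. blinfun_apply (y n) z)" for z :: 'a
  proof -
    obtain g :: "'a \<Rightarrow>\<^sub>L real" where g: "norm g \<le> 1" "blinfun_apply g z = norm z"
      using hahn_banach_norming by blast
    have "norm z \<le> dual_norm S N (\<lambda>n. blinfun_apply g (x n)) * N (\<lambda>n. blinfun_apply (y n) z)"
      using gz_bound[of g z] g by simp
    also have "\<dots> \<le> (B2 * norm g) * N (\<lambda>n. blinfun_apply (y n) z)"
      using coframe_up Nnn[OF TS] by (intro mult_right_mono) auto
    also have "\<dots> \<le> B2 * N (\<lambda>n. blinfun_apply (y n) z)"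
    proof -
      have "B2 * norm g \<le> B2" using g(1) B2 by (simp add: mult_left_le)
      then show ?thesis using Nnn[OF TS, of z] by (rule mult_right_mono)
    qed
    finally show ?thesis using B2 by (simp add: field_simps)
  qed

  have coframe_low: "(1/B1) * norm g \<le> dual_norm S N (\<lambda>n. blinfun_apply g (x n))" for g :: "'a \<Rightarrow>\<^sub>L real"
  proof -
    have "norm g \<le> B1 * dual_norm S N (\<lambda>n. blinfun_apply g (x n))"
    proof (rule norm_blinfun_bound)
      show "0 \<le> B1 * dual_norm S N (\<lambda>n. blinfun_apply g (x n))" using B1 dual_nonneg[OF bD] by simp
      fix z
      have "norm (blinfun_apply g z) \<le> dual_norm S N (\<lambda>n. blinfun_apply g (x n)) * N (\<lambda>n. blinfun_apply (y n) z)"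
        using gz_bound by simp
      also have "\<dots> \<le> dual_norm S N (\<lambda>n. blinfun_apply g (x n)) * (B1 * norm z)"
        using frame_up dual_nonneg[OF bD] by (intro mult_left_mono) auto
      finally show "norm (blinfun_apply g z) \<le> B1 * dual_norm S N (\<lambda>n. blinfun_apply g (x n)) * norm z"
        by (simp add: mult_ac)
    qed
    then show ?thesis using B1 by (simp add: field_simps)
  qed

  have gsum: "(\<lambda>n. blinfun_apply g (x n) *\<^sub>R y n) sums g" for g :: "'a \<Rightarrow>\<^sub>L real"
  proof -
    define b where "b = (\<lambda>n. blinfun_apply g (x n))"
    have bDb: "in_dual S N b" unfolding b_def by (rule bD)
    define d where "d k = (\<lambda>j. b j - trunc_seq b k j)" for k
    have dD: "in_dual S N (d k)" for k unfolding d_def by (rule dual_trunc[OF bDb])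
    have dlim: "(\<lambda>k. dual_norm S N (d k)) \<longlonglongrightarrow> 0"
      using assms(3) bDb unfolding coord_functionals_basis_def d_def by blast
    have est: "norm (g - (\<Sum>n<k. b n *\<^sub>R y n)) \<le> B1 * dual_norm S N (d k)" for k
    proof (rule norm_blinfun_bound)
      show "0 \<le> B1 * dual_norm S N (d k)" using B1 dual_nonneg[OF dD] by simp
      fix z
      let ?a = "\<lambda>n. blinfun_apply (y n) z"
      have s1: "(\<lambda>n. ?a n * b n) sums blinfun_apply g z" unfolding b_def using gz .
      have s2: "(\<lambda>n. ?a n * trunc_seq b k n) sums (\<Sum>n<k. ?a n * b n)"
      proof -
        have "(\<lambda>n. ?a n * trunc_seq b k n) sums (\<Sum>n\<in>{..<k}. ?a n * trunc_seq b k n)"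
          by (rule sums_finite) (auto simp: trunc_eq)
        then show ?thesis by (simp add: trunc_eq)
      qed
      have "(\<lambda>n. ?a n * d k n) sums (blinfun_apply g z - (\<Sum>n<k. ?a n * b n))"
        unfolding d_def using sums_diff[OF s1 s2] by (simp add: right_diff_distrib)
      then have eq: "blinfun_apply (g - (\<Sum>n<k. b n *\<^sub>R y n)) z = (\<Sum>n. ?a n * d k n)"
        by (simp add: sums_unique[symmetric] blinfun.diff_left blinfun.sum_left blinfun.scaleR_left mult.commute)
      have "norm (blinfun_apply (g - (\<Sum>n<k. b n *\<^sub>R y n)) z) \<le> dual_norm S N (d k) * N ?a"
        unfolding eq real_norm_def by (rule dual_bound[OF dD TS])
      also have "\<dots> \<le> dual_norm S N (d k) * (B1 * norm z)"
        using frame_up dual_nonneg[OF dD] by (intro mult_left_mono) auto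
      finally show "norm (blinfun_apply (g - (\<Sum>n<k. b n *\<^sub>R y n)) z) \<le> B1 * dual_norm S N (d k) * norm z"
        by (simp add: mult_ac)
    qed
    have "(\<lambda>k. (\<Sum>n<k. b n *\<^sub>R y n) - g) \<longlonglongrightarrow> 0"
    proof (rule Lim_null_comparison)
      show "\<forall>\<^sub>F k in sequentially. norm ((\<Sum>n<k. b n *\<^sub>R y n) - g) \<le> B1 * dual_norm S N (d k)"
        using est by (intro always_eventually allI) (simp add: norm_minus_commute)
      show "(\<lambda>k. B1 * dual_norm S N (d k)) \<longlonglongrightarrow> 0"
        using tendsto_mult_right_zero[OF dlim] by simp
    qed
    then show ?thesis unfolding sums_def b_def by (simp add: LIM_zero_iff)
  qed

  show ?thesis
    unfolding is_cross_frame_def is_coframe_def is_frame_def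
  proof (intro conjI allI)
    show "in_dual S N (\<lambda>n. blinfun_apply g (x n))" for g :: "'a \<Rightarrow>\<^sub>L real" by (rule bD)
    show "\<exists>A B. A > 0 \<and> B > 0 \<and> (\<forall>g::'a \<Rightarrow>\<^sub>L real. A * norm g \<le> dual_norm S N (\<lambda>n. blinfun_apply g (x n)) \<and>
        dual_norm S N (\<lambda>n. blinfun_apply g (x n)) \<le> B * norm g)"
      using coframe_low coframe_up B1 B2 by (intro exI[of _ "1/B1"] exI[of _ B2]) auto
    show "(\<lambda>n. blinfun_apply (y n) z) \<in> S" for z by (rule TS)
    show "\<exists>A B. A > 0 \<and> B > 0 \<and> (\<forall>z. A * norm z \<le> N (\<lambda>n. blinfun_apply (y n) z) \<and>
        N (\<lambda>n. blinfun_apply (y n) z) \<le> B * norm z)"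
      using frame_low frame_up B1 B2 by (intro exI[of _ "1/B2"] exI[of _ B1]) auto
    show "(\<lambda>n. blinfun_apply (y n) z *\<^sub>R x n) sums z" for z using assms(6) by blast
    show "(\<lambda>n. blinfun_apply g (x n) *\<^sub>R y n) sums g" for g :: "'a \<Rightarrow>\<^sub>L real" by (rule gsum)
  qed
qed

end
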